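(* Let $n\le N$, let $\Xi$ be the set of designs $\{(\boldsymbol{x}_i,w_i):i=1,\ldots,N\}$ with $0\le w_i\le1/n$ and $\sum_iw_i=1$, let $\Phi\in\Lambda$, and let $\xi^*\in\Xi$ satisfy $\Phi(\xi^* )=\min_{\xi\in\Xi}\Phi(\xi)$. Let $\epsilon>0$ and let $\xi_\epsilon=\{(\boldsymbol{x}_i,w_i)\}\in\Xi$ with $\Phi(\xi_\epsilon)<\infty$. Suppose there is a partition $\mathcal{X}=\mathcal{X}_1\cup\mathcal{X}_2\cup\mathcal{X}_3$ of $\{\boldsymbol{x}_1,\ldots,\boldsymbol{x}_N\}$ such that (a) $w_i=0$ for $\boldsymbol{x}_i\in\mathcal{X}_1$ and $w_i=1/n$ for $\boldsymbol{x}_i\in\mathcal{X}_3$; (b) if $\mathcal{X}_2=\emptyset$, then $\max_{\boldsymbol{x}_i\in\mathcal{X}_3}F_\Phi(\xi_\epsilon;\boldsymbol{x}_i)\le\min_{\boldsymbol{x}_i\in\mathcal{X}_1}F_\Phi(\xi_\epsilon;\boldsymbol{x}_i)+\epsilon$; (c) if $\mathcal{X}_2\ne\emptyset$, then there is a number $s$ such that for every $\boldsymbol{x}_i\in\mathcal{X}_2$: (i) $0<w_i<1/n$; (ii) $s-\epsilon/2<F_\Phi(\xi_\epsilon;\boldsymbol{x}_i)<s+\epsilon/2$; and (iii) $\max_{\boldsymbol{x}_j\in\mathcal{X}_3}F_\Phi(\xi_\epsilon;\boldsymbol{x}_j)\le s+\epsilon/2$ and $s-\epsilon/2\le\min_{\boldsymbol{x}_j\in\mathcal{X}_1}F_\Phi(\xi_\epsilon;\boldsymbol{x}_j)$.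 Then $\xi_\epsilon$ is an $\epsilon$-approximation of a $\Phi$-optimal design, i.e. $\Phi(\xi_\epsilon)-\Phi(\xi^* )\le\epsilon$. (Maximum over the empty set is $-\infty$, minimum over the empty set is $+\infty$.)
   Context: Designs $\xi=\{(\boldsymbol{x}_i,w_i)\}$ on $\mathcal{X}=\{\boldsymbol{x}_1,\ldots,\boldsymbol{x}_N\}$ with $w_i\ge0$, $\sum w_i=1$; $M(\xi)=\sum_iw_iI_{\boldsymbol\theta}(\boldsymbol{x}_i)$ with symmetric PSD $I_{\boldsymbol\theta}(\boldsymbol{x}_i)$; $\Phi(\xi)$ is a criterion of $M(\xi)$ ($+\infty$ when undefined). $F_\Phi(\xi,\eta)=\lim_{\alpha\downarrow0}[\Phi((1-\alpha)\xi+\alpha\eta)-\Phi(\xi)]/\alpha$; $F_\Phi(\xi;\boldsymbol{x}_i)=F_\Phi(\xi,\delta_{\boldsymbol{x}_i})$ with $\delta_{\boldsymbol{x}_i}$ the one-point design at $\boldsymbol{x}_i$. $\Lambda$: criteria convex in the weights, linearly differentiable ($F_\Phi(\xi,\eta)=\sum_i\lambda_iF_\Phi(\xi;\boldsymbol{x}_i)$ for $\eta=\{(\boldsymbol{x}_i,\lambda_i)\}$ whenever $\Phi(\xi)<\infty$), and infinitely differentiable along line segments of designs. A design $\xi$ is an $\epsilon$-approximation of an optimal design $\xi^*$ if $\Phi(\xi)-\Phi(\xi^* )\le\epsilon$. *)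

theory Defs
  imports "HOL-Analysis.Analysis"
begin

text \<open>Candidate points are indexed by i < N.  A design is its weight vector
  w :: nat => real (weights outside {..<N} are fixed to 0).\<close>

definition design :: "nat \<Rightarrow> (nat \<Rightarrow> real) \<Rightarrow> bool" where
  "design N w \<longleftrightarrow> (\<forall>i<N. 0 \<le> w i) \<and> (\<forall>i\<ge>N. w i = 0) \<and> (\<Sum>i<N. w i) = 1"

definition bounded_design :: "nat \<Rightarrow> nat \<Rightarrow> (nat \<Rightarrow> real) \<Rightarrow> bool" where
  "bounded_design N n w \<longleftrightarrow> design N w \<and> (\<forall>i<N. w i \<le> 1 / real n)"

definition delta :: "nat \<Rightarrow> nat \<Rightarrow> real" where
  "delta i = (\<lambda>j. if j = i then 1 else 0)"

definition mix :: "real \<Rightarrow> (nat \<Rightarrow> real) \<Rightarrow> (nat \<Rightarrow> real) \<Rightarrow> nat \<Rightarrow> real" where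
  "mix a xi eta = (\<lambda>j. (1 - a) * xi j + a * eta j)"

definition info_matrix :: "nat \<Rightarrow> (nat \<Rightarrow> real^'p^'p) \<Rightarrow> (nat \<Rightarrow> real) \<Rightarrow> real^'p^'p" where
  "info_matrix N I w = (\<Sum>i<N. w i *\<^sub>R I i)"

definition psd_sym :: "real^'p^'p \<Rightarrow> bool" where
  "psd_sym A \<longleftrightarrow> transpose A = A \<and> (\<forall>x. 0 \<le> x \<bullet> (A *v x))"

definition diff_quot :: "((nat \<Rightarrow> real) \<Rightarrow> ereal) \<Rightarrow> (nat \<Rightarrow> real) \<Rightarrow> (nat \<Rightarrow> real) \<Rightarrow> real \<Rightarrow> ereal" where
  "diff_quot Phi xi eta a = (Phi (mix a xi eta) - Phi xi) / ereal a"

definition dirderiv :: "((nat \<Rightarrow> real) \<Rightarrow> ereal) \<Rightarrow> (nat \<Rightarrow> real) \<Rightarrow> (nat \<Rightarrow> real) \<Rightarrow> ereal" where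
  "dirderiv Phi xi eta = Lim (at_right 0) (diff_quot Phi xi eta)"

definition dirderiv_pt :: "((nat \<Rightarrow> real) \<Rightarrow> ereal) \<Rightarrow> (nat \<Rightarrow> real) \<Rightarrow> nat \<Rightarrow> ereal" where
  "dirderiv_pt Phi xi i = dirderiv Phi xi (delta i)"

definition convex_crit :: "nat \<Rightarrow> ((nat \<Rightarrow> real) \<Rightarrow> ereal) \<Rightarrow> bool" where
  "convex_crit N Phi \<longleftrightarrow>
     (\<forall>xi eta a. design N xi \<longrightarrow> design N eta \<longrightarrow> 0 \<le> a \<longrightarrow> a \<le> 1 \<longrightarrow>
        Phi (mix a xi eta) \<le> ereal (1 - a) * Phi xi + ereal a * Phi eta)"

definition lin_differentiable :: "nat \<Rightarrow> ((nat \<Rightarrow> real) \<Rightarrow> ereal) \<Rightarrow> bool" where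
  "lin_differentiable N Phi \<longleftrightarrow>
     (\<forall>xi. design N xi \<longrightarrow> Phi xi < \<infinity> \<longrightarrow>
        (\<forall>i<N. (diff_quot Phi xi (delta i) \<longlongrightarrow> dirderiv_pt Phi xi i) (at_right 0)
               \<and> \<bar>dirderiv_pt Phi xi i\<bar> \<noteq> \<infinity>) \<and>
        (\<forall>eta. design N eta \<longrightarrow>
            (diff_quot Phi xi eta \<longlongrightarrow> dirderiv Phi xi eta) (at_right 0) \<and>
            dirderiv Phi xi eta = (\<Sum>i<N. ereal (eta i) * dirderiv_pt Phi xi i)))"

definition smooth_on_segments :: "nat \<Rightarrow> ((nat \<Rightarrow> real) \<Rightarrow> ereal) \<Rightarrow> bool" where
  "smooth_on_segments N Phi \<longleftrightarrow>
     (\<forall>xi eta. design N xi \<longrightarrow> design N eta \<longrightarrow> Phi xi < \<infinity> \<longrightarrow> Phi eta < \<infinity> \<longrightarrow>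
        (\<forall>a\<in>{0..1}. Phi (mix a xi eta) < \<infinity>) \<and>
        (\<exists>g :: nat \<Rightarrow> real \<Rightarrow> real.
            (\<forall>a\<in>{0..1}. g 0 a = real_of_ereal (Phi (mix a xi eta))) \<and>
            (\<forall>k. \<forall>a\<in>{0..1}. (g k has_real_derivative g (Suc k) a) (at a within {0..1}))))"

definition crit_class_Lambda :: "nat \<Rightarrow> ((nat \<Rightarrow> real) \<Rightarrow> ereal) \<Rightarrow> bool" where
  "crit_class_Lambda N Phi \<longleftrightarrow>
     (\<forall>xi. design N xi \<longrightarrow> Phi xi \<noteq> -\<infinity>) \<and>
     convex_crit N Phi \<and> lin_differentiable N Phi \<and> smooth_on_segments N Phi"

end

theory Submission
  imports Defs
begin

lemma key_sum:
  fixes d f :: "nat \<Rightarrow> real"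
  assumes "finite A" "\<And>i. i\<in>A \<Longrightarrow> d i * (f i - s) \<ge> -(e/2)*\<bar>d i\<bar>"
    "sum d A = 0" "sum (\<lambda>i. \<bar>d i\<bar>) A \<le> 2" "e > 0"
  shows "(\<Sum>i\<in>A. d i * f i) \<ge> -e"
proof -
  have "(\<Sum>i\<in>A. d i * f i) = (\<Sum>i\<in>A. d i * (f i - s)) + s * sum d A"
    by (simp add: algebra_simps sum.distrib sum_distrib_left sum_subtractf)
  also have "\<dots> = (\<Sum>i\<in>A. d i * (f i - s))" using assms(3) by simp
  also have "\<dots> \<ge> (\<Sum>i\<in>A. -(e/2)*\<bar>d i\<bar>)" by (rule sum_mono) (use assms(2) in auto)
  also have "(\<Sum>i\<in>A. -(e/2)*\<bar>d i\<bar>) = -(e/2) * sum (\<lambda>i. \<bar>d i\<bar>) A"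
    by (simp add: sum_distrib_left)
  also have "\<dots> \<ge> -e" using assms(4,5) by (simp add: mult_left_mono)
  finally show ?thesis by linarith
qed

lemma mix_design:
  assumes "design N x" "design N y" "0 \<le> a" "a \<le> 1"
  shows "design N (mix a x y)"
  using assms unfolding design_def mix_def
  by (auto simp: sum.distrib sum_distrib_left[symmetric] intro!: add_nonneg_nonneg mult_nonneg_nonneg)

lemma conv_bound:
  assumes L: "crit_class_Lambda N Phi" and dx: "design N x" and dy: "design N y"
    and Px: "Phi x = ereal P" and Py: "Phi y = ereal Q"
  shows "dirderiv Phi x y \<le> ereal (Q - P)"
proof -
  have lin: "lin_differentiable N Phi" and cv: "convex_crit N Phi"
    using L unfolding crit_class_Lambda_def by auto
  have T: "(diff_quot Phi x y \<longlongrightarrow> dirderiv Phi x y) (at_right 0)"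
  proof -
    have fin: "Phi x < \<infinity>" using Px by simp
    have "\<forall>eta. design N eta \<longrightarrow> (diff_quot Phi x eta \<longlongrightarrow> dirderiv Phi x eta) (at_right 0)"
      using lin dx fin unfolding lin_differentiable_def by blast
    then show ?thesis using dy by blast
  qed
  have ev: "eventually (\<lambda>a. diff_quot Phi x y a \<le> ereal (Q - P)) (at_right 0)"
    unfolding eventually_at_right_field
  proof (intro exI[of _ 1] conjI allI impI)
    show "(0::real) < 1" by simp
    fix a :: real assume a0: "0 < a" and a1: "a < 1"
    have a: "0 < a \<and> a < 1" using a0 a1 by simp
    have le: "Phi (mix a x y) \<le> ereal ((1-a)*P + a*Q)"
      using cv dx dy a Px Py unfolding convex_crit_def
      by (metis (no_types, lifting) less_eq_real_def not_less plus_ereal.simps(1) times_ereal.simps(1))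
    show "diff_quot Phi x y a \<le> ereal (Q - P)"
    proof (cases "Phi (mix a x y)")
      case (real m)
      then have "m \<le> (1-a)*P + a*Q" using le by simp
      then have "(m - P)/a \<le> Q - P" using a by (simp add: divide_simps algebra_simps)
      then show ?thesis using real a unfolding diff_quot_def Px by simp
    next
      case PInf then show ?thesis using le by simp
    next
      case MInf then show ?thesis using a unfolding diff_quot_def Px by simp
    qed
  qed
  show ?thesis
    by (rule tendsto_le[OF trivial_limit_at_right_real tendsto_const T ev])
qed

lemma self_zero:
  assumes L: "crit_class_Lambda N Phi" and dx: "design N x" and Px: "Phi x = ereal P"
  shows "dirderiv Phi x x = 0"
proof -
  have lin: "lin_differentiable N Phi"
    using L unfolding crit_class_Lambda_def by auto
  have T: "(diff_quot Phi x x \<longlongrightarrow> dirderiv Phi x x) (at_right 0)"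
  proof -
    have fin: "Phi x < \<infinity>" using Px by simp
    have "\<forall>eta. design N eta \<longrightarrow> (diff_quot Phi x eta \<longlongrightarrow> dirderiv Phi x eta) (at_right 0)"
      using lin dx fin unfolding lin_differentiable_def by blast
    then show ?thesis using dx by blast
  qed
  have "mix a x x = x" for a unfolding mix_def by (auto simp: algebra_simps)
  then have "diff_quot Phi x x = (\<lambda>a. 0)" unfolding diff_quot_def by (simp add: Px)
  then have "((\<lambda>a. 0) \<longlongrightarrow> dirderiv Phi x x) (at_right (0::real))" using T by simp
  then show ?thesis using tendsto_unique[OF trivial_limit_at_right_real _ tendsto_const] by blast
qed

theorem theorem4:
  fixes N n :: nat
    and I :: "nat \<Rightarrow> real^'p^'p"
    and phi :: "real^'p^'p \<Rightarrow> ereal"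
    and Phi :: "(nat \<Rightarrow> real) \<Rightarrow> ereal"
    and xi_star xi_eps :: "nat \<Rightarrow> real"
    and X1 X2 X3 :: "nat set"
    and \<epsilon> :: real
  assumes n_pos: "0 < n" and nN: "n \<le> N"
    and I_psd: "\<forall>i<N. psd_sym (I i)"
    and Phi_crit: "\<forall>w. design N w \<longrightarrow> Phi w = phi (info_matrix N I w)"
    and Lambda: "crit_class_Lambda N Phi"
    and opt_in: "bounded_design N n xi_star"
    and opt_min: "\<forall>xi. bounded_design N n xi \<longrightarrow> Phi xi_star \<le> Phi xi"
    and eps_pos: "0 < \<epsilon>"
    and eps_in: "bounded_design N n xi_eps"
    and eps_fin: "Phi xi_eps < \<infinity>"
    and part_cover: "X1 \<union> X2 \<union> X3 = {..<N}"
    and part_disj: "X1 \<inter> X2 = {}" "X1 \<inter> X3 = {}" "X2 \<inter> X3 = {}"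
    and cond_a: "(\<forall>i\<in>X1. xi_eps i = 0) \<and> (\<forall>i\<in>X3. xi_eps i = 1 / real n)"
    and cond_b: "X2 = {} \<Longrightarrow>
       (SUP i\<in>X3. dirderiv_pt Phi xi_eps i) \<le> (INF i\<in>X1. dirderiv_pt Phi xi_eps i) + ereal \<epsilon>"
    and cond_c: "X2 \<noteq> {} \<Longrightarrow> \<exists>s::real. \<forall>i\<in>X2.
         (0 < xi_eps i \<and> xi_eps i < 1 / real n) \<and>
         (ereal (s - \<epsilon>/2) < dirderiv_pt Phi xi_eps i \<and> dirderiv_pt Phi xi_eps i < ereal (s + \<epsilon>/2)) \<and>
         ((SUP j\<in>X3. dirderiv_pt Phi xi_eps j) \<le> ereal (s + \<epsilon>/2) \<and>
          ereal (s - \<epsilon>/2) \<le> (INF j\<in>X1. dirderiv_pt Phi xi_eps j))"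
  shows "Phi xi_eps - Phi xi_star \<le> ereal \<epsilon>"
proof -
  have dE: "design N xi_eps" and dS: "design N xi_star"
    using eps_in opt_in unfolding bounded_design_def by auto
  have bS: "\<forall>i<N. xi_star i \<le> 1 / real n" using opt_in unfolding bounded_design_def by auto
  have lin: "lin_differentiable N Phi" and nm: "\<forall>xi. design N xi \<longrightarrow> Phi xi \<noteq> -\<infinity>"
    using Lambda unfolding crit_class_Lambda_def by auto
  obtain P where P: "Phi xi_eps = ereal P"
    using eps_fin nm dE by (cases "Phi xi_eps") auto
  have "Phi xi_star \<le> Phi xi_eps" using opt_min eps_in by auto
  then obtain Q where Q: "Phi xi_star = ereal Q"
    using P nm dS by (cases "Phi xi_star") auto
  have fin: "Phi xi_eps < \<infinity>" using P by simp
  have LD: "(\<forall>i<N. \<bar>dirderiv_pt Phi xi_eps i\<bar> \<noteq> \<infinity>) \<and>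
        (\<forall>eta. design N eta \<longrightarrow>
            dirderiv Phi xi_eps eta = (\<Sum>i<N. ereal (eta i) * dirderiv_pt Phi xi_eps i))"
  proof -
    note L0 = lin[unfolded lin_differentiable_def, rule_format, OF dE fin]
    have A: "\<forall>i<N. \<bar>dirderiv_pt Phi xi_eps i\<bar> \<noteq> \<infinity>" using conjunct1[OF L0] by simp
    have B: "\<forall>eta. design N eta \<longrightarrow>
            dirderiv Phi xi_eps eta = (\<Sum>i<N. ereal (eta i) * dirderiv_pt Phi xi_eps i)"
      using conjunct2[OF L0] by simp
    show ?thesis using A B by (intro conjI)
  qed
  define f where "f i = real_of_ereal (dirderiv_pt Phi xi_eps i)" for i
  have Ff: "dirderiv_pt Phi xi_eps i = ereal (f i)" if "i < N" for i
    using LD that unfolding f_def by (simp add: ereal_real)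
  have rep: "dirderiv Phi xi_eps eta = ereal (\<Sum>i<N. eta i * f i)" if "design N eta" for eta
  proof -
    have "dirderiv Phi xi_eps eta = (\<Sum>i<N. ereal (eta i) * dirderiv_pt Phi xi_eps i)"
      using LD that by blast
    also have "\<dots> = (\<Sum>i<N. ereal (eta i * f i))"
      by (rule sum.cong) (auto simp: Ff)
    finally show ?thesis by simp
  qed
  have h1: "(\<Sum>i<N. xi_eps i * f i) = 0"
    using self_zero[OF Lambda dE P] rep[OF dE] by (simp add: zero_ereal_def)
  have h2: "(\<Sum>i<N. xi_star i * f i) \<le> Q - P"
    using conv_bound[OF Lambda dE dS P Q] rep[OF dS] by simp
  have sE: "sum xi_eps {..<N} = 1" and sS: "sum xi_star {..<N} = 1"
    and nE: "\<forall>i<N. 0 \<le> xi_eps i" and nS: "\<forall>i<N. 0 \<le> xi_star i"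
    using dE dS unfolding design_def by auto
  have sub1: "X1 \<subseteq> {..<N}" and sub2: "X2 \<subseteq> {..<N}" and sub3: "X3 \<subseteq> {..<N}"
    using part_cover by auto
  obtain s where S1: "\<forall>i\<in>X1. s - \<epsilon>/2 \<le> f i" and S3: "\<forall>i\<in>X3. f i \<le> s + \<epsilon>/2"
    and S2: "\<forall>i\<in>X2. \<bar>f i - s\<bar> \<le> \<epsilon>/2"
  proof (cases "X2 = {}")
    case True
    have "X3 \<noteq> {}"
    proof
      assume X3e: "X3 = {}"
      then have "X1 = {..<N}" using part_cover True by auto
      then have "sum xi_eps {..<N} = 0" using cond_a by simp
      then show False using sE by simp
    qed
    have fin3: "finite X3" using sub3 finite_subset by blast
    define s where "s = Max (f ` X3) - \<epsilon>/2"
    have "\<forall>i\<in>X3. f i \<le> s + \<epsilon>/2" unfolding s_def using fin3 by auto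
    moreover have "\<forall>i\<in>X1. s - \<epsilon>/2 \<le> f i"
    proof
      fix i assume i: "i \<in> X1"
      have "f j \<le> f i + \<epsilon>" if j: "j \<in> X3" for j
      proof -
        have "ereal (f j) \<le> (SUP i\<in>X3. dirderiv_pt Phi xi_eps i)"
          using j sub3 Ff SUP_upper[OF j, of "dirderiv_pt Phi xi_eps"] by auto
        also have "\<dots> \<le> (INF i\<in>X1. dirderiv_pt Phi xi_eps i) + ereal \<epsilon>" using cond_b True by blast
        also have "\<dots> \<le> ereal (f i) + ereal \<epsilon>"
        proof -
          have "(INF i\<in>X1. dirderiv_pt Phi xi_eps i) \<le> ereal (f i)"
            using i sub1 Ff INF_lower[OF i, of "dirderiv_pt Phi xi_eps"] by auto
          then show ?thesis by (rule add_right_mono)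
        qed
        finally show ?thesis by simp
      qed
      then have "Max (f ` X3) \<le> f i + \<epsilon>" using fin3 \<open>X3 \<noteq> {}\<close> by auto
      then show "s - \<epsilon>/2 \<le> f i" unfolding s_def by simp
    qed
    ultimately show ?thesis using that True by blast
  next
    case False
    then obtain s where hs: "\<forall>i\<in>X2.
         (0 < xi_eps i \<and> xi_eps i < 1 / real n) \<and>
         (ereal (s - \<epsilon>/2) < dirderiv_pt Phi xi_eps i \<and> dirderiv_pt Phi xi_eps i < ereal (s + \<epsilon>/2)) \<and>
         ((SUP j\<in>X3. dirderiv_pt Phi xi_eps j) \<le> ereal (s + \<epsilon>/2) \<and>
          ereal (s - \<epsilon>/2) \<le> (INF j\<in>X1. dirderiv_pt Phi xi_eps j))"
      using cond_c by blast
    obtain i0 where i0: "i0 \<in> X2" using False by blast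
    have "\<forall>i\<in>X2. \<bar>f i - s\<bar> \<le> \<epsilon>/2"
    proof
      fix i assume i: "i \<in> X2"
      then have "ereal (s - \<epsilon>/2) < ereal (f i)" "ereal (f i) < ereal (s + \<epsilon>/2)"
      proof -
        have "i < N" using i sub2 by auto
        then have e: "dirderiv_pt Phi xi_eps i = ereal (f i)" using Ff by blast
        show "ereal (s - \<epsilon>/2) < ereal (f i)" "ereal (f i) < ereal (s + \<epsilon>/2)"
        proof -
          have "ereal (s - \<epsilon>/2) < dirderiv_pt Phi xi_eps i \<and> dirderiv_pt Phi xi_eps i < ereal (s + \<epsilon>/2)"
            using hs i by blast
          then show "ereal (s - \<epsilon>/2) < ereal (f i)" "ereal (f i) < ereal (s + \<epsilon>/2)"
            unfolding e by auto
        qed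
      qed
      then have "s - \<epsilon>/2 < f i" "f i < s + \<epsilon>/2" by simp_all
      then show "\<bar>f i - s\<bar> \<le> \<epsilon>/2" by linarith
    qed
    moreover have "\<forall>i\<in>X3. f i \<le> s + \<epsilon>/2"
    proof
      fix i assume i: "i \<in> X3"
      have "ereal (f i) \<le> (SUP j\<in>X3. dirderiv_pt Phi xi_eps j)"
        using i sub3 Ff SUP_upper[OF i, of "dirderiv_pt Phi xi_eps"] by auto
      also have "\<dots> \<le> ereal (s + \<epsilon>/2)" using hs i0 by blast
      finally show "f i \<le> s + \<epsilon>/2" by simp
    qed
    moreover have "\<forall>i\<in>X1. s - \<epsilon>/2 \<le> f i"
    proof
      fix i assume i: "i \<in> X1"
      have "ereal (s - \<epsilon>/2) \<le> (INF j\<in>X1. dirderiv_pt Phi xi_eps j)" using hs i0 by blast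
      also have "\<dots> \<le> ereal (f i)"
        using i sub1 Ff INF_lower[OF i, of "dirderiv_pt Phi xi_eps"] by auto
      finally show "s - \<epsilon>/2 \<le> f i" by simp
    qed
    ultimately show ?thesis using that by blast
  qed
  define d where "d i = xi_star i - xi_eps i" for i
  have cond: "d i * (f i - s) \<ge> -(\<epsilon>/2)*\<bar>d i\<bar>" if i: "i \<in> {..<N}" for i
  proof -
    have "i \<in> X1 \<or> i \<in> X2 \<or> i \<in> X3" using i part_cover by auto
    then show ?thesis
    proof (elim disjE)
      assume i1: "i \<in> X1"
      have dp: "d i \<ge> 0" using i1 cond_a nS i unfolding d_def by auto
      have "d i * (-(\<epsilon>/2)) \<le> d i * (f i - s)"
        using S1 i1 dp by (intro mult_left_mono) auto
      then show ?thesis using dp by (simp add: algebra_simps)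
    next
      assume i3: "i \<in> X3"
      have dn: "d i \<le> 0" using i3 cond_a bS i unfolding d_def by auto
      have "d i * (\<epsilon>/2) \<le> d i * (f i - s)"
        using S3 i3 dn by (intro mult_left_mono_neg) auto
      then show ?thesis using dn by (simp add: algebra_simps)
    next
      assume i2: "i \<in> X2"
      have "\<bar>d i * (f i - s)\<bar> \<le> \<bar>d i\<bar> * (\<epsilon>/2)"
        unfolding abs_mult using S2 i2 by (intro mult_left_mono) auto
      then have "- (\<bar>d i\<bar> * (\<epsilon> / 2)) \<le> d i * (f i - s)" by (simp only: abs_le_iff) linarith
      then show ?thesis by (simp add: algebra_simps)
    qed
  qed
  have sd: "sum d {..<N} = 0" unfolding d_def using sE sS by (simp add: sum_subtractf)
  have sa: "sum (\<lambda>i. \<bar>d i\<bar>) {..<N} \<le> 2"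
  proof -
    have "sum (\<lambda>i. \<bar>d i\<bar>) {..<N} \<le> sum (\<lambda>i. xi_star i + xi_eps i) {..<N}"
      unfolding d_def
    proof (intro sum_mono)
      fix i assume "i \<in> {..<N}"
      then have "0 \<le> xi_eps i" "0 \<le> xi_star i" using nE nS by auto
      then show "\<bar>xi_star i - xi_eps i\<bar> \<le> xi_star i + xi_eps i" by linarith
    qed
    also have "\<dots> = 2" using sE sS by (simp add: sum.distrib)
    finally show ?thesis .
  qed
  have key: "(\<Sum>i\<in>{..<N}. d i * f i) \<ge> -\<epsilon>"
    by (rule key_sum[OF _ cond sd sa eps_pos]) auto
  have "(\<Sum>i\<in>{..<N}. d i * f i) = (\<Sum>i<N. xi_star i * f i) - (\<Sum>i<N. xi_eps i * f i)"
    unfolding d_def by (simp add: left_diff_distrib sum_subtractf)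
  then have "P - Q \<le> \<epsilon>" using key h1 h2 by linarith
  then show ?thesis using P Q by simp
qed

end
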